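(* Let $n\geq 4$ be even and let $f:(\mathbb{P}(\mathbb{R}^n))^{n+1}\to\mathbb{R}_\varepsilon$ be a non-zero $\mathrm{GL}_n(\mathbb{R})$-equivariant map. Then $df$ does not vanish everywhere on $(\mathbb{P}(\mathbb{R}^n))^{n+2}$. (For $n=2$ this conclusion fails.)
   Context: $\mathbb{R}_\varepsilon$ is $\mathbb{R}$ with $g\in\mathrm{GL}_n(\mathbb{R})$ acting by $\operatorname{sign}\det g$; equivariance means $f(gx_0,\dots,gx_n)=\operatorname{sign}(\det g)f(x_0,\dots,x_n)$. The coboundary is $df(x_0,\dots,x_{n+1})=\sum_{i=0}^{n+1}(-1)^if(x_0,\dots,\widehat{x_i},\dots,x_{n+1})$. *)

theory Defs
  imports "HOL-Analysis.Analysis"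
begin

definition proj_point :: "(real^'n) set \<Rightarrow> bool" where
  "proj_point L \<longleftrightarrow> (\<exists>v. v \<noteq> 0 \<and> L = span {v})"

definition proj_tuples :: "nat \<Rightarrow> (real^'n) set list set" where
  "proj_tuples k = {xs. length xs = k \<and> (\<forall>L\<in>set xs. proj_point L)}"

definition act_line :: "real^'n^'n \<Rightarrow> (real^'n) set \<Rightarrow> (real^'n) set" where
  "act_line g L = (\<lambda>v. g *v v) ` L"

text \<open>GL_n(R)-equivariance into R_epsilon (g acts by sign det g) on (P(R^n))^k.\<close>
definition equivariant_eps :: "nat \<Rightarrow> ((real^'n) set list \<Rightarrow> real) \<Rightarrow> bool" where
  "equivariant_eps k f \<longleftrightarrow>
     (\<forall>g::real^'n^'n. invertible g \<longrightarrow>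
        (\<forall>xs\<in>proj_tuples k. f (map (act_line g) xs) = sgn (det g) * f xs))"

definition omit :: "nat \<Rightarrow> 'a list \<Rightarrow> 'a list" where
  "omit i xs = take i xs @ drop (Suc i) xs"

definition cobound :: "('a list \<Rightarrow> real) \<Rightarrow> 'a list \<Rightarrow> real" where
  "cobound f xs = (\<Sum>i<length xs. (-1) ^ i * f (omit i xs))"

end

theory Submission
  imports Defs
begin

lemma det_rowrep:
  fixes r :: "real^'n" and k :: 'n
  shows "det (\<chi> i j. if i = k then r$j else (if i = j then 1 else 0)) = r$k"
proof -
  define A :: "real^'n^'n" where "A = (\<chi> i j. if i = k then r$j else (if i = j then 1 else 0))"
  define x where "x = - (\<Sum>j\<in>UNIV-{k}. r$j *s row j A)"
  have x: "x \<in> vec.span {row j A |j. j \<noteq> k}"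
    unfolding x_def
    by (intro vec.span_neg vec.span_sum vec.span_scale vec.span_base) auto
  have rowj: "row j A = axis j 1" if "j \<noteq> k" for j
    using that by (simp add: row_def A_def axis_def vec_eq_iff)
  have xm: "x $ m = (if m = k then 0 else - r$m)" for m
  proof -
    have "x $ m = - (\<Sum>j\<in>UNIV-{k}. r$j * (if j = m then 1 else 0))"
      unfolding x_def using rowj by (auto simp: axis_def intro!: sum.cong split: if_splits)
    also have "\<dots> = (if m = k then 0 else - r$m)"
      by (simp add: sum.delta' if_distrib cong: if_cong)
    finally show ?thesis .
  qed
  have eq: "(\<chi> m. if m = k then row k A + x else row m A) =
        (\<chi> i j. if i = j then (if i = k then r$k else 1) else 0)"
    by (simp add: vec_eq_iff row_def A_def xm)
  have "det A = det (\<chi> m. if m = k then row k A + x else row m A)"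
    using det_row_span[OF x] by simp
  also have "\<dots> = (\<Prod>i\<in>UNIV. if i = k then r$k else 1)"
    unfolding eq by (subst det_diagonal) auto
  also have "\<dots> = r$k" by (simp add: prod.delta' if_distrib cong: if_cong)
  finally show ?thesis unfolding A_def .
qed

lemma det_rank_one:
  fixes u w :: "real^'n"
  shows "det (\<chi> i j. (if i = j then 1 else 0) + u$i * w$j) = 1 + w \<bullet> u"
proof (cases "u = 0")
  case True
  have "(\<chi> i j. (if i = j then 1 else 0) + u$i * w$j) = (mat 1 :: real^'n^'n)"
    using True by (simp add: vec_eq_iff mat_def)
  then show ?thesis using True by simp
next
  case False
  then obtain k where uk: "u$k \<noteq> 0" by (metis vec_eq_iff zero_index)
  define C :: "real^'n^'n" where "C = (\<chi> i j. if j = k then u$i else (if i = j then 1 else 0))"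
  define M :: "real^'n^'n" where "M = (\<chi> i j. (if i = j then 1 else 0) + u$i * w$j)"
  define w' :: "real^'n" where "w' = (\<chi> j. \<Sum>i\<in>UNIV. w$i * C$i$j)"
  define N :: "real^'n^'n" where "N = (\<chi> i j. if i = k then (axis k 1 + w')$j else (if i = j then 1 else 0))"
  have detC: "det C = u$k"
  proof -
    have "C = transpose (\<chi> i j. if i = k then u$j else (if i = j then 1 else 0))"
      by (simp add: C_def transpose_def vec_eq_iff)
    then show ?thesis using det_rowrep[where r=u and k=k] by simp
  qed
  have detN: "det N = 1 + w'$k"
    unfolding N_def using det_rowrep[where r="axis k 1 + w'" and k=k] by (simp add: axis_def)
  have w'k: "w'$k = w \<bullet> u"
    by (simp add: w'_def C_def inner_vec_def mult.commute)
  have MC: "(M ** C)$i$j = C$i$j + u$i * w'$j" for i j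
  proof -
    have "(M ** C)$i$j = (\<Sum>l\<in>UNIV. ((if i = l then 1 else 0) + u$i * w$l) * C$l$j)"
      by (simp add: matrix_matrix_mult_def M_def)
    also have "\<dots> = (\<Sum>l\<in>UNIV. (if i = l then C$l$j else 0) + u$i * (w$l * C$l$j))"
      by (intro sum.cong refl) (auto simp: algebra_simps)
    also have "\<dots> = (\<Sum>l\<in>UNIV. (if i = l then C$l$j else 0)) + u$i * (\<Sum>l\<in>UNIV. w$l * C$l$j)"
      by (simp add: sum.distrib sum_distrib_left)
    also have "\<dots> = C$i$j + u$i * w'$j"
      by (simp add: w'_def)
    finally show ?thesis .
  qed
  have CN: "(C ** N)$i$j = C$i$j + u$i * w'$j" for i j
  proof -
    have "(C ** N)$i$j = (\<Sum>l\<in>UNIV. C$i$l * (if l = j then 1 else 0)) + C$i$k * w'$j"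
    proof -
      have "(C ** N)$i$j = (\<Sum>l\<in>UNIV. C$i$l * N$l$j)"
        by (simp add: matrix_matrix_mult_def)
      also have "\<dots> = (\<Sum>l\<in>UNIV. C$i$l * (if l = j then 1 else 0) + (if l = k then C$i$k * w'$j else 0))"
        by (intro sum.cong refl) (auto simp: N_def axis_def algebra_simps)
      also have "\<dots> = (\<Sum>l\<in>UNIV. C$i$l * (if l = j then 1 else 0)) + C$i$k * w'$j"
        by (simp add: sum.distrib)
      finally show ?thesis .
    qed
    also have "(\<Sum>l\<in>UNIV. C$i$l * (if l = j then 1 else 0)) = (\<Sum>l\<in>UNIV. if l = j then C$i$l else 0)"
      by (intro sum.cong refl) auto
    also have "\<dots> = C$i$j" by simp
    also have "C$i$k = u$i" by (simp add: C_def)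
    finally show ?thesis .
  qed
  have "M ** C = C ** N" using MC CN by (simp add: vec_eq_iff)
  then have "det M * det C = det C * det N" by (metis det_mul)
  then have "det M = det N" using detC uk by simp
  then show ?thesis using detN w'k by (simp add: M_def)
qed

lemma span_neg_single: "span {- (p::real^'n)} = span {p}"
proof (rule subset_antisym)
  show "span {- p} \<subseteq> span {p}"
    by (intro span_minimal) (auto intro: span_neg span_base simp: subspace_span)
  have "p \<in> span {- p}" using span_neg[OF span_base[of "-p" "{-p}"]] by simp
  then show "span {p} \<subseteq> span {- p}"
    by (intro span_minimal) (auto simp: subspace_span)
qed

lemma kill:
  fixes f :: "(real^'n) set list \<Rightarrow> real" and p q :: "real^'n"
  assumes eq: "equivariant_eps m f" and xs: "xs \<in> proj_tuples m" and qp: "q \<bullet> p \<noteq> 0"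
    and L: "\<forall>L\<in>set xs. \<exists>v. L = span {v} \<and> (q \<bullet> v = 0 \<or> v = p)"
  shows "f xs = 0"
proof -
  define u where "u = (- (2 / (q \<bullet> p))) *\<^sub>R p"
  define g :: "real^'n^'n" where "g = (\<chi> i j. (if i = j then 1 else 0) + u$i * q$j)"
  have detg: "det g = -1"
    unfolding g_def det_rank_one using qp by (simp add: u_def)
  have inv: "invertible g" using detg by (simp add: invertible_det_nz)
  have gv: "g *v v = v + (q \<bullet> v) *\<^sub>R u" for v
  proof -
    have "(g *v v)$i = (v + (q \<bullet> v) *\<^sub>R u)$i" for i
    proof -
      have "(g *v v)$i = (\<Sum>j\<in>UNIV. (if i = j then v$j else 0) + u$i * (q$j * v$j))"
        by (auto simp: g_def matrix_vector_mult_def algebra_simps intro!: sum.cong)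
      also have "\<dots> = v$i + u$i * (\<Sum>j\<in>UNIV. q$j * v$j)"
        by (simp add: sum.distrib sum_distrib_left)
      finally show ?thesis by (simp add: inner_vec_def mult.commute)
    qed
    then show ?thesis by (simp add: vec_eq_iff)
  qed
  have lin: "linear ((*v) g)" by (simp add: matrix_vector_mul_linear)
  have act: "act_line g (span {v}) = span {v}" if "q \<bullet> v = 0 \<or> v = p" for v
  proof -
    have "act_line g (span {v}) = span {g *v v}"
      unfolding act_line_def using span_linear_image[OF lin, of "{v}"] by simp
    also have "\<dots> = span {v}"
    proof (cases "q \<bullet> v = 0")
      case True then show ?thesis by (simp add: gv)
    next
      case False
      then have "v = p" using that by simp
      have "g *v p = p + (-2) *\<^sub>R p" using qp by (simp add: gv u_def)
      also have "\<dots> = - p" by (simp add: scaleR_2 algebra_simps)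
      finally have "g *v v = - p" using \<open>v = p\<close> by simp
      then show ?thesis using \<open>v = p\<close> span_neg_single by simp
    qed
    finally show ?thesis .
  qed
  have "map (act_line g) xs = xs"
  proof (rule map_idI)
    fix L assume "L \<in> set xs"
    then obtain v where "L = span {v}" "q \<bullet> v = 0 \<or> v = p" using L by blast
    then show "act_line g L = L" using act by simp
  qed
  moreover have "f (map (act_line g) xs) = sgn (det g) * f xs"
    using eq xs inv unfolding equivariant_eps_def by blast
  ultimately have "f xs = sgn (det g) * f xs" by simp
  then show ?thesis using detg by simp
qed

lemma set_omit: "set (omit i xs) \<subseteq> {xs!j | j. j < length xs \<and> j \<noteq> i}"
proof
  fix x assume "x \<in> set (omit i xs)"
  then consider "x \<in> set (take i xs)" | "x \<in> set (drop (Suc i) xs)" unfolding omit_def by auto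
  then show "x \<in> {xs!j | j. j < length xs \<and> j \<noteq> i}"
  proof cases
    case 1
    then obtain j where "j < length (take i xs)" "x = take i xs ! j" by (auto simp: in_set_conv_nth)
    then show ?thesis by auto
  next
    case 2
    then obtain j where "j < length (drop (Suc i) xs)" "x = drop (Suc i) xs ! j" by (auto simp: in_set_conv_nth)
    then show ?thesis by (intro CollectI exI[of _ "Suc i + j"]) auto
  qed
qed

theorem proposition3p2:
  fixes f :: "(real^'n) set list \<Rightarrow> real"
  assumes "even CARD('n)" and "CARD('n) \<ge> 4"
    and "equivariant_eps (CARD('n) + 1) f"
    and "\<exists>xs\<in>proj_tuples (CARD('n) + 1). f xs \<noteq> 0"
  shows "\<exists>xs\<in>proj_tuples (CARD('n) + 2). cobound f xs \<noteq> 0"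
proof -
  define N where "N = CARD('n)"
  have N4: "N \<ge> 4" using assms(2) by (simp add: N_def)
  have eqv: "equivariant_eps (N + 1) f" using assms(3) by (simp add: N_def)
  obtain y where y: "y \<in> proj_tuples (N + 1)" and fy: "f y \<noteq> 0" using assms(4) by (auto simp: N_def)
  have leny: "length y = N + 1" and ppy: "\<forall>L\<in>set y. proj_point L" using y by (auto simp: proj_tuples_def)
  define u where "u i = (SOME v. v \<noteq> 0 \<and> y!i = span {v})" for i
  have u: "u i \<noteq> 0 \<and> y!i = span {u i}" if "i < N + 1" for i
  proof -
    have "proj_point (y!i)" using ppy leny that by (simp)
    then have "\<exists>v. v \<noteq> 0 \<and> y!i = span {v}" by (simp add: proj_point_def)
    then show ?thesis unfolding u_def by (rule someI_ex)
  qed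
  obtain h where h: "bij_betw h {0..<N} (UNIV::'n set)"
    using ex_bij_betw_nat_finite[of "UNIV::'n set"] by (auto simp: N_def)
  define hi where "hi = inv_into {0..<N} h"
  have himg: "k \<in> h ` {0..<N}" for k using h unfolding bij_betw_def by auto
  have hi1: "hi k < N" "h (hi k) = k" for k
    using inv_into_into[OF himg[of k]] f_inv_into_f[OF himg[of k]] unfolding hi_def by auto
  have hi2: "hi (h m) = m" if "m < N" for m
    using h that unfolding hi_def bij_betw_def by (auto intro: inv_into_f_f)
  have hinj: "h m = h m' \<longleftrightarrow> m = m'" if "m < N" "m' < N" for m m'
    using h that unfolding bij_betw_def inj_on_def by auto
  define cv where "cv k = u (Suc (hi k))" for k
  have ycol: "y!(Suc m) = span {cv (h m)}" if "m < N" for m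
    using u[of "Suc m"] that by (simp add: cv_def hi2)
  have cvnz: "cv k \<noteq> 0" for k using u[of "Suc (hi k)"] hi1 by (simp add: cv_def)
  have y0: "y!0 = span {u 0}" "u 0 \<noteq> 0" using u[of 0] by auto
  have yset: "L = span {u 0} \<or> (\<exists>k. L = span {cv k})" if "L \<in> set y" for L
  proof -
    from that obtain i where i0: "i < length y" "L = y!i" unfolding in_set_conv_nth by blast
    show ?thesis
    proof (cases i)
      case 0 then show ?thesis using i0(2) y0(1) by blast
    next
      case (Suc m)
      then have "m < N" using i0(1) leny by simp
      then show ?thesis using i0(2) ycol[of m] Suc by blast
    qed
  qed
  define R :: "real^'n^'n" where "R = (\<chi> k. cv k)"
  have Rv: "R *v x = (\<chi> k. cv k \<bullet> x)" for x
    by (simp add: R_def matrix_vector_mult_def inner_vec_def vec_eq_iff)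
  show ?thesis
  proof (cases "\<exists>r. r \<noteq> 0 \<and> (\<forall>k. cv k \<bullet> r = 0)")
    case True
    then obtain r where r: "r \<noteq> 0" "\<And>k. cv k \<bullet> r = 0" by blast
    define p where "p = (if r \<bullet> u 0 = 0 then r else u 0)"
    have "f y = 0"
    proof (rule kill[OF eqv y, of r p])
      show "r \<bullet> p \<noteq> 0" using r by (auto simp: p_def)
      show "\<forall>L\<in>set y. \<exists>v. L = span {v} \<and> (r \<bullet> v = 0 \<or> v = p)"
      proof
        fix L assume "L \<in> set y"
        then consider "L = span {u 0}" | k where "L = span {cv k}" using yset by blast
        then show "\<exists>v. L = span {v} \<and> (r \<bullet> v = 0 \<or> v = p)"
        proof cases
          case 1 then show ?thesis by (auto simp: p_def)
        next
          case 2 then show ?thesis using r(2)[of k] by (auto simp: inner_commute)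
        qed
      qed
    qed
    then show ?thesis using fy by simp
  next
    case False
    have "\<forall>x. R *v x = 0 \<longrightarrow> x = 0"
    proof (intro allI impI)
      fix x assume "R *v x = 0"
      then have "\<forall>k. cv k \<bullet> x = 0" by (simp add: Rv vec_eq_iff)
      then show "x = 0" using False by blast
    qed
    then obtain B where "B ** R = mat 1" using matrix_left_invertible_ker by blast
    then have RB: "R ** B = mat 1" using matrix_left_right_inverse by blast
    define rr where "rr j = (\<chi> i. B$i$j)" for j
    have dual: "rr j \<bullet> cv k = (if j = k then 1 else 0)" for j k
    proof -
      have "(R ** B)$k$j = rr j \<bullet> cv k"
        by (simp add: matrix_matrix_mult_def R_def rr_def inner_vec_def mult.commute)
      then show ?thesis using RB by (auto simp: mat_def)
    qed
    define c where "c k = rr k \<bullet> u 0" for k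
    have cnz: "c k \<noteq> 0" for k
    proof
      assume ck: "c k = 0"
      have "f y = 0"
      proof (rule kill[OF eqv y, of "rr k" "cv k"])
        show "rr k \<bullet> cv k \<noteq> 0" by (simp add: dual)
        show "\<forall>L\<in>set y. \<exists>v. L = span {v} \<and> (rr k \<bullet> v = 0 \<or> v = cv k)"
        proof
          fix L assume "L \<in> set y"
          then consider "L = span {u 0}" | j where "L = span {cv j}" using yset by blast
          then show "\<exists>v. L = span {v} \<and> (rr k \<bullet> v = 0 \<or> v = cv k)"
          proof cases
            case 1 then show ?thesis using ck by (auto simp: c_def)
          next
            case 2 then show ?thesis by (auto simp: dual)
          qed
        qed
      qed
      then show False using fy by simp
    qed
    define a where "a = h 0"
    define b where "b = h 1"
    define d where "d = h 2"
    have ab: "a \<noteq> b" "a \<noteq> d" "b \<noteq> d" using hinj[of 0 1] hinj[of 0 2] hinj[of 1 2] N4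
      by (auto simp: a_def b_def d_def)
    define w where "w = c a *\<^sub>R cv a + c b *\<^sub>R cv b"
    have rrw: "rr j \<bullet> w = (if j = a then c a else 0) + (if j = b then c b else 0)" for j
      by (simp add: w_def inner_add_right dual)
    have wnz: "w \<noteq> 0" using rrw[of a] cnz[of a] ab by auto
    define M where "M = span {w}"
    define xs where "xs = y @ [M]"
    have xsP: "xs \<in> proj_tuples (N + 2)"
      using y wnz by (auto simp: xs_def M_def proj_tuples_def proj_point_def)
    have omitx: "omit i xs = omit i y @ [M]" if "i < N + 1" for i
      using that leny by (simp add: omit_def xs_def)
    have face: "f (omit i xs) = 0"
      if i: "i < N + 1" and qp: "q \<bullet> p \<noteq> 0"
        and h0: "i \<noteq> 0 \<Longrightarrow> q \<bullet> u 0 = 0 \<or> u 0 = p"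
        and hm: "\<And>m. m < N \<Longrightarrow> Suc m \<noteq> i \<Longrightarrow> q \<bullet> cv (h m) = 0 \<or> cv (h m) = p"
        and hw: "q \<bullet> w = 0" for i q p
    proof -
      have so: "set (omit i y) \<subseteq> {y!j | j. j < N + 1 \<and> j \<noteq> i}" using set_omit[of i y] leny by simp
      have lo: "length (omit i y) = N" using i leny by (simp add: omit_def)
      have "omit i xs \<in> proj_tuples (N + 1)"
        using so lo ppy omitx[OF i] wnz
        by (auto simp: proj_tuples_def M_def proj_point_def leny)
      moreover have "\<forall>L\<in>set (omit i xs). \<exists>v. L = span {v} \<and> (q \<bullet> v = 0 \<or> v = p)"
      proof
        fix L assume "L \<in> set (omit i xs)"
        then consider "L = M" | j where "j < N + 1" "j \<noteq> i" "L = y!j"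
          using so omitx[OF i] by auto
        then show "\<exists>v. L = span {v} \<and> (q \<bullet> v = 0 \<or> v = p)"
        proof cases
          case 1 then show ?thesis using hw by (auto simp: M_def)
        next
          case 2
          show ?thesis
          proof (cases j)
            case 0 then show ?thesis using 2 h0 y0 by auto
          next
            case (Suc m) then show ?thesis using 2 hm[of m] ycol[of m] by auto
          qed
        qed
      qed
      ultimately show ?thesis using kill[OF eqv _ qp] by blast
    qed
    have faces: "f (omit i xs) = 0" if i: "i < N + 1" for i
    proof (cases i)
      case 0
      show ?thesis
      proof (rule face[OF i, of "rr d" "cv d"])
        show "rr d \<bullet> cv d \<noteq> 0" by (simp add: dual)
        show "i \<noteq> 0 \<Longrightarrow> rr d \<bullet> u 0 = 0 \<or> u 0 = cv d" using 0 by simp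
        show "rr d \<bullet> cv (h m) = 0 \<or> cv (h m) = cv d" for m by (simp add: dual)
        show "rr d \<bullet> w = 0" using ab by (simp add: rrw)
      qed
    next
      case (Suc m0)
      have m0: "m0 < N" using i Suc by simp
      have hneq: "h m \<noteq> h m0" if "m < N" "Suc m \<noteq> i" for m
        using hinj[OF that(1) m0] that Suc by simp
      consider "h m0 = a" | "h m0 = b" | "h m0 \<noteq> a" "h m0 \<noteq> b" by blast
      then show ?thesis
      proof cases
        case 1
        show ?thesis
        proof (rule face[OF i, of "c a *\<^sub>R rr b - c b *\<^sub>R rr a" "cv b"])
          show "(c a *\<^sub>R rr b - c b *\<^sub>R rr a) \<bullet> cv b \<noteq> 0" using ab cnz[of a] by (simp add: inner_diff_left dual)
          show "(c a *\<^sub>R rr b - c b *\<^sub>R rr a) \<bullet> u 0 = 0 \<or> u 0 = cv b"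
            by (simp add: inner_diff_left c_def)
          show "(c a *\<^sub>R rr b - c b *\<^sub>R rr a) \<bullet> cv (h m) = 0 \<or> cv (h m) = cv b"
            if "m < N" "Suc m \<noteq> i" for m
            using hneq[OF that] 1 by (auto simp: inner_diff_left dual)
          show "(c a *\<^sub>R rr b - c b *\<^sub>R rr a) \<bullet> w = 0"
            using ab by (simp add: inner_diff_left rrw)
        qed
      next
        case 2
        show ?thesis
        proof (rule face[OF i, of "c b *\<^sub>R rr a - c a *\<^sub>R rr b" "cv a"])
          show "(c b *\<^sub>R rr a - c a *\<^sub>R rr b) \<bullet> cv a \<noteq> 0" using ab cnz[of b] by (simp add: inner_diff_left dual)
          show "(c b *\<^sub>R rr a - c a *\<^sub>R rr b) \<bullet> u 0 = 0 \<or> u 0 = cv a"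
            by (simp add: inner_diff_left c_def)
          show "(c b *\<^sub>R rr a - c a *\<^sub>R rr b) \<bullet> cv (h m) = 0 \<or> cv (h m) = cv a"
            if "m < N" "Suc m \<noteq> i" for m
            using hneq[OF that] 2 by (auto simp: inner_diff_left dual)
          show "(c b *\<^sub>R rr a - c a *\<^sub>R rr b) \<bullet> w = 0"
            using ab by (simp add: inner_diff_left rrw)
        qed
      next
        case 3
        show ?thesis
        proof (rule face[OF i, of "rr (h m0)" "u 0"])
          show "rr (h m0) \<bullet> u 0 \<noteq> 0" using cnz by (simp add: c_def)
          show "i \<noteq> 0 \<Longrightarrow> rr (h m0) \<bullet> u 0 = 0 \<or> u 0 = u 0" by simp
          show "rr (h m0) \<bullet> cv (h m) = 0 \<or> cv (h m) = u 0"
            if "m < N" "Suc m \<noteq> i" for m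
            using hneq[OF that] by (auto simp: dual)
          show "rr (h m0) \<bullet> w = 0" using 3 by (simp add: rrw)
        qed
      qed
    qed
    have lenx: "length xs = N + 2" by (simp add: xs_def leny)
    have last: "omit (N + 1) xs = y"
      by (simp add: omit_def xs_def leny)
    have "cobound f xs = (\<Sum>i<N + 1. (-1) ^ i * f (omit i xs)) + (-1) ^ (N + 1) * f (omit (N + 1) xs)"
      unfolding cobound_def lenx by simp
    also have "\<dots> = (-1) ^ (N + 1) * f y"
      using faces last by simp
    finally have "cobound f xs \<noteq> 0" using fy by simp
    then show ?thesis using xsP by (auto simp: N_def)
  qed
qed

end
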